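(* Let $0\le\epsilon<1$ and let $\omega=(\omega_n)_{n\ge0}$ be a Markov chain on $\{-1,+1\}$ with transition matrix $Q=\begin{pmatrix}\epsilon&1-\epsilon\\1-\epsilon&\epsilon\end{pmatrix}$ started from its invariant distribution $\frac12(\delta_{-1}+\delta_{+1})$ (so $f(x)=x$). Set $p(\epsilon)=\sum_{t\ge1}K(t)\frac{1+(2\epsilon-1)^t}{2}$. Then the annealed critical point of the pinning model with disorder $\omega$ is $$h_c^a(\beta)=-\log\left(p(\epsilon)\cosh\beta+\sqrt{p(\epsilon)^2\cosh^2\beta-2p(\epsilon)+1}\right),\qquad \beta\ge0.$$
   Context: $K(n)$, $n\ge1$, is a probability distribution on $\{1,2,\dots\}$ with $K(n)>0$ for all $n$ (the interarrival law of a recurrent renewal process $\tau$ with $\tau_0=0$, $\delta_n=\mathbf 1_{\{n\in\tau\}}$). The partition function is $Z_{N,\beta,h,\omega}=E\big[\exp\big(\sum_{n=1}^N(\beta\omega_n+h)\delta_n\big)\delta_N\big]$, and the annealed critical point is $h_c^a(\beta)=\sup\{h: \lim_N\frac1N\log\mathbb{E}Z_{N,\beta,h,\omega}=0\}$, $\mathbb{E}$ denoting average over $\omega$. *)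

theory Defs
  imports Complex_Main "HOL-Library.FuncSet"
begin

text \<open>Probability that the renewal process (interarrival law K, tau_0 = 0) satisfies
  tau \<inter> [1, max S] = S, for a finite S of positive integers:
  product of K over the gaps between consecutive points (starting from 0).\<close>
definition renewal_weight :: "(nat \<Rightarrow> real) \<Rightarrow> nat set \<Rightarrow> real" where
  "renewal_weight K S = (\<Prod>s\<in>S. K (s - Max (insert 0 {t\<in>S. t < s})))"

text \<open>Law of (omega_0,...,omega_N) for the two-state Markov chain on {-1,+1} with
  transition matrix [[eps,1-eps],[1-eps,eps]] started from the uniform (invariant) law.\<close>
definition mc_prob :: "real \<Rightarrow> nat \<Rightarrow> (nat \<Rightarrow> real) \<Rightarrow> real" where
  "mc_prob \<epsilon> N w = (1/2) * (\<Prod>n\<in>{1..N}. (if w n = w (n - 1) then \<epsilon> else 1 - \<epsilon>))"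

text \<open>Quenched partition function
  Z_{N,beta,h,omega} = E[exp(sum_{n=1}^N (beta omega_n + h) delta_n) delta_N],
  written out as a sum over renewal configurations tau \<inter> [1,N] = S with N \<in> S.\<close>
definition Zq :: "(nat \<Rightarrow> real) \<Rightarrow> nat \<Rightarrow> real \<Rightarrow> real \<Rightarrow> (nat \<Rightarrow> real) \<Rightarrow> real" where
  "Zq K N \<beta> h w = (\<Sum>S\<in>{S. S \<subseteq> {1..N} \<and> N \<in> S}.
      renewal_weight K S * exp (\<Sum>n\<in>S. \<beta> * w n + h))"

definition Zann :: "(nat \<Rightarrow> real) \<Rightarrow> real \<Rightarrow> nat \<Rightarrow> real \<Rightarrow> real \<Rightarrow> real" where
  "Zann K \<epsilon> N \<beta> h = (\<Sum>w\<in>PiE {0..N} (\<lambda>_. {-1, 1}). mc_prob \<epsilon> N w * Zq K N \<beta> h w)"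

definition hc_ann :: "(nat \<Rightarrow> real) \<Rightarrow> real \<Rightarrow> real \<Rightarrow> real" where
  "hc_ann K \<epsilon> \<beta> = Sup {h. (\<lambda>N. ln (Zann K \<epsilon> N \<beta> h) / real N) \<longlonglongrightarrow> 0}"

end

theory Submission
  imports Defs
begin



lemma sum_PiE_Suc:
  "(\<Sum>w\<in>PiE {0..Suc N} B. f w) = (\<Sum>w\<in>PiE {0..N} B. \<Sum>x\<in>B (Suc N). f (w(Suc N := x)))"
proof -
  have e: "{0..Suc N} = insert (Suc N) {0..N}" by auto
  have "(\<Sum>w\<in>PiE {0..Suc N} B. f w) = (\<Sum>w\<in>(\<lambda>(y, g). g(Suc N := y)) ` (B (Suc N) \<times> PiE {0..N} B). f w)"
    by (simp add: e PiE_insert_eq)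
  also have "\<dots> = (\<Sum>(y,g)\<in>B (Suc N) \<times> PiE {0..N} B. f (g(Suc N := y)))"
  proof -
    have "inj_on (\<lambda>p. (snd p)(Suc N := fst p)) (B (Suc N) \<times> PiE {0..N} B)"
      using inj_combinator[of "Suc N" "{0..N}" B] by (simp add: case_prod_unfold)
    then show ?thesis by (subst sum.reindex) (auto simp: case_prod_unfold)
  qed
  also have "\<dots> = (\<Sum>y\<in>B (Suc N). \<Sum>g\<in>PiE {0..N} B. f (g(Suc N := y)))"
    by (simp add: sum.cartesian_product)
  also have "\<dots> = (\<Sum>w\<in>PiE {0..N} B. \<Sum>x\<in>B (Suc N). f (w(Suc N := x)))"
    by (rule sum.swap)
  finally show ?thesis .
qed

definition Pm :: "real \<Rightarrow> nat \<Rightarrow> real \<Rightarrow> real \<Rightarrow> real" where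
  "Pm \<epsilon> t x y = (1 + x * y * (2*\<epsilon>-1)^t) / 2"

lemma mc_upd: "mc_prob \<epsilon> (Suc N) (w(Suc N := x)) = mc_prob \<epsilon> N w * (if x = w N then \<epsilon> else 1 - \<epsilon>)"
proof -
  have "(\<Prod>n\<in>{1..N}. (if (w(Suc N := x)) n = (w(Suc N := x)) (n - 1) then \<epsilon> else 1 - \<epsilon>))
      = (\<Prod>n\<in>{1..N}. (if w n = w (n - 1) then \<epsilon> else 1 - \<epsilon>))"
    by (rule prod.cong) auto
  then show ?thesis unfolding mc_prob_def by (simp add: prod.cl_ivl_Suc)
qed

lemma sum_pm1: "(\<Sum>y\<in>{-1,1::real}. f y) = f (-1) + f 1" by simp

lemma trans_Pm: "x \<in> {-1,1} \<Longrightarrow> y \<in> {-1,1} \<Longrightarrow> (if y = x then \<epsilon> else 1 - \<epsilon>) = Pm \<epsilon> 1 x y"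
  unfolding Pm_def by auto

lemma CK: "a \<in> {-1,1} \<Longrightarrow> (\<Sum>y\<in>{-1,1}. Pm \<epsilon> d a y * (\<Sum>x\<in>{-1,1}. Pm \<epsilon> 1 y x * \<phi> x))
   = (\<Sum>x\<in>{-1,1}. Pm \<epsilon> (Suc d) a x * \<phi> x)"
  unfolding Pm_def sum_pm1 by (auto simp: algebra_simps divide_simps)

lemma Pm0: "a \<in> {-1,1} \<Longrightarrow> (\<Sum>y\<in>{-1,1}. Pm \<epsilon> 0 a y * \<phi> y) = \<phi> a"
  unfolding Pm_def sum_pm1 by auto

lemma marginal:
  fixes G :: "(nat \<Rightarrow> real) \<Rightarrow> real"
  assumes "m \<le> N" and G: "\<And>w w'. (\<forall>i\<le>m. w i = w' i) \<Longrightarrow> G w = G w'"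
  shows "(\<Sum>w\<in>PiE {0..N} (\<lambda>_. {-1,1}). mc_prob \<epsilon> N w * G w * \<phi> (w N))
       = (\<Sum>w\<in>PiE {0..m} (\<lambda>_. {-1,1}). mc_prob \<epsilon> m w * G w * (\<Sum>y\<in>{-1,1}. Pm \<epsilon> (N-m) (w m) y * \<phi> y))"
proof -
  obtain d where N: "N = m + d" using assms(1) le_Suc_ex by blast
  have "(\<Sum>w\<in>PiE {0..m+d} (\<lambda>_. {-1,1}). mc_prob \<epsilon> (m+d) w * G w * \<phi> (w (m+d)))
       = (\<Sum>w\<in>PiE {0..m} (\<lambda>_. {-1,1}). mc_prob \<epsilon> m w * G w * (\<Sum>y\<in>{-1,1}. Pm \<epsilon> d (w m) y * \<phi> y))"
  proof (induction d arbitrary: \<phi>)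
    case 0
    have "mc_prob \<epsilon> m w * G w * \<phi> (w m) =
          mc_prob \<epsilon> m w * G w * (\<Sum>y\<in>{- 1, 1}. Pm \<epsilon> 0 (w m) y * \<phi> y)"
      if "w \<in> PiE {0..m} (\<lambda>_. {-1,1::real})" for w
    proof -
      from that have "w m \<in> {-1,1}" by (auto simp: PiE_def Pi_def)
      then show ?thesis by (auto simp: Pm_def)
    qed
    then show ?case by (simp only: add_0_right) (rule sum.cong[OF refl], blast)
  next
    case (Suc d)
    have "(\<Sum>w\<in>PiE {0..m + Suc d} (\<lambda>_. {-1,1}). mc_prob \<epsilon> (m + Suc d) w * G w * \<phi> (w (m + Suc d)))
      = (\<Sum>w\<in>PiE {0..m + d} (\<lambda>_. {-1,1}). \<Sum>x\<in>{-1,1}. mc_prob \<epsilon> (Suc (m + d)) (w(Suc (m+d) := x)) * G (w(Suc (m+d) := x)) * \<phi> x)"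
      by (simp add: sum_PiE_Suc)
    also have "\<dots> = (\<Sum>w\<in>PiE {0..m + d} (\<lambda>_. {-1,1}). mc_prob \<epsilon> (m+d) w * G w * (\<Sum>x\<in>{-1,1}. Pm \<epsilon> 1 (w (m+d)) x * \<phi> x))"
    proof (rule sum.cong[OF refl])
      fix w assume "w \<in> PiE {0..m+d} (\<lambda>_. {-1,1::real})"
      then have wm: "w (m+d) \<in> {-1,1}" by (auto simp: PiE_def Pi_def)
      have Gu: "G (w(Suc (m+d) := x)) = G w" for x by (rule G) auto
      show "(\<Sum>x\<in>{-1,1}. mc_prob \<epsilon> (Suc (m + d)) (w(Suc (m+d) := x)) * G (w(Suc (m+d) := x)) * \<phi> x)
         = mc_prob \<epsilon> (m+d) w * G w * (\<Sum>x\<in>{-1,1}. Pm \<epsilon> 1 (w (m+d)) x * \<phi> x)"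
        using trans_Pm[OF wm, of "-1" \<epsilon>] trans_Pm[OF wm, of 1 \<epsilon>]
        unfolding sum_pm1 mc_upd Gu by (simp add: algebra_simps)
    qed
    also have "\<dots> = (\<Sum>w\<in>PiE {0..m} (\<lambda>_. {-1,1}). mc_prob \<epsilon> m w * G w * (\<Sum>y\<in>{-1,1}. Pm \<epsilon> d (w m) y * (\<Sum>x\<in>{-1,1}. Pm \<epsilon> 1 y x * \<phi> x)))"
      by (rule Suc.IH)
    also have "\<dots> = (\<Sum>w\<in>PiE {0..m} (\<lambda>_. {-1,1}). mc_prob \<epsilon> m w * G w * (\<Sum>y\<in>{-1,1}. Pm \<epsilon> (Suc d) (w m) y * \<phi> y))"
    proof (rule sum.cong[OF refl])
      fix w assume "w \<in> PiE {0..m} (\<lambda>_. {-1,1::real})"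
      then have wm: "w m \<in> {-1,1}" by (auto simp: PiE_def Pi_def)
      show "mc_prob \<epsilon> m w * G w * (\<Sum>y\<in>{-1,1}. Pm \<epsilon> d (w m) y * (\<Sum>x\<in>{-1,1}. Pm \<epsilon> 1 y x * \<phi> x)) =
         mc_prob \<epsilon> m w * G w * (\<Sum>y\<in>{-1,1}. Pm \<epsilon> (Suc d) (w m) y * \<phi> y)"
        using CK[OF wm] by simp
    qed
    finally show ?case .
  qed
  then show ?thesis using N by simp
qed




definition Aset :: "nat \<Rightarrow> nat set set" where "Aset N = {S. S \<subseteq> {1..N} \<and> N \<in> S}"

lemma finite_Aset: "finite (Aset N)"
  unfolding Aset_def by (rule finite_subset[of _ "Pow {1..N}"]) auto

definition Ff :: "(nat \<Rightarrow> real) \<Rightarrow> real \<Rightarrow> real \<Rightarrow> real \<Rightarrow> nat \<Rightarrow> nat set \<Rightarrow> real \<Rightarrow> real" where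
  "Ff K \<epsilon> \<beta> h N S \<sigma> = (\<Sum>w\<in>PiE {0..N} (\<lambda>_. {-1,1}). mc_prob \<epsilon> N w *
      (renewal_weight K S * exp (\<Sum>n\<in>S. \<beta> * w n + h)) * (if w N = \<sigma> then 1 else 0))"

definition Wf :: "(nat \<Rightarrow> real) \<Rightarrow> real \<Rightarrow> real \<Rightarrow> real \<Rightarrow> nat \<Rightarrow> real \<Rightarrow> real" where
  "Wf K \<epsilon> \<beta> h N \<sigma> = (\<Sum>S\<in>Aset N. Ff K \<epsilon> \<beta> h N S \<sigma>)"

lemma PiE_mem_pm: "w \<in> PiE {0..N::nat} (\<lambda>_. {-1,1::real}) \<Longrightarrow> i \<le> N \<Longrightarrow> w i = -1 \<or> w i = 1"
  by (auto simp: PiE_iff)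

lemma Zann_W: "Zann K \<epsilon> N \<beta> h = Wf K \<epsilon> \<beta> h N 1 + Wf K \<epsilon> \<beta> h N (-1)"
proof -
  let ?f = "\<lambda>w S. mc_prob \<epsilon> N w * (renewal_weight K S * exp (\<Sum>n\<in>S. \<beta> * w n + h))"
  have "Zann K \<epsilon> N \<beta> h = (\<Sum>w\<in>PiE {0..N} (\<lambda>_. {-1,1}). \<Sum>S\<in>Aset N. ?f w S)"
    unfolding Zann_def Zq_def Aset_def by (simp add: sum_distrib_left)
  also have "\<dots> = (\<Sum>w\<in>PiE {0..N} (\<lambda>_. {-1,1}). \<Sum>S\<in>Aset N.
      ?f w S * (if w N = 1 then 1 else 0) + ?f w S * (if w N = -1 then 1 else 0))"
  proof (rule sum.cong[OF refl])
    fix w assume "w \<in> PiE {0..N} (\<lambda>_. {-1,1::real})"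
    then have "w N = -1 \<or> w N = 1" by (rule PiE_mem_pm) simp
    then have e: "?f w S * (if w N = 1 then 1 else 0) + ?f w S * (if w N = -1 then 1 else 0) = ?f w S" for S
      by auto
    show "(\<Sum>S\<in>Aset N. ?f w S) = (\<Sum>S\<in>Aset N. ?f w S * (if w N = 1 then 1 else 0) + ?f w S * (if w N = -1 then 1 else 0))"
      by (simp only: e)
  qed
  also have "\<dots> = (\<Sum>S\<in>Aset N. \<Sum>w\<in>PiE {0..N} (\<lambda>_. {-1,1}).
      ?f w S * (if w N = 1 then 1 else 0) + ?f w S * (if w N = -1 then 1 else 0))"
    by (rule sum.swap)
  also have "\<dots> = Wf K \<epsilon> \<beta> h N 1 + Wf K \<epsilon> \<beta> h N (-1)"
    unfolding Wf_def Ff_def sum.distrib ..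
  finally show ?thesis .
qed

lemma S0_bounds:
  assumes "S0 \<subseteq> {1..N-1::nat}" "N \<ge> 1" "x \<in> S0" shows "1 \<le> x" "x < N"
proof -
  have "x \<in> {1..N-1}" using assms(1,3) by blast
  then show "1 \<le> x" "x < N" using assms(2) by auto
qed

lemma rw_insert:
  assumes "S0 \<subseteq> {1..N-1::nat}" "N \<ge> 1"
  shows "renewal_weight K (insert N S0) = K (N - Max (insert 0 S0)) * renewal_weight K S0"
proof -
  have fin: "finite S0" using assms(1) finite_subset by blast
  have nN: "N \<notin> S0" using S0_bounds[OF assms] by blast
  have e1: "{t \<in> insert N S0. t < N} = S0" using S0_bounds[OF assms] by auto
  have e2: "{t \<in> insert N S0. t < s} = {t \<in> S0. t < s}" if "s \<in> S0" for s
    using S0_bounds(2)[OF assms that] by auto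
  have "renewal_weight K (insert N S0) = K (N - Max (insert 0 {t \<in> insert N S0. t < N})) *
     (\<Prod>s\<in>S0. K (s - Max (insert 0 {t \<in> insert N S0. t < s})))"
    unfolding renewal_weight_def using fin nN by simp
  also have "\<dots> = K (N - Max (insert 0 S0)) * renewal_weight K S0"
    unfolding renewal_weight_def e1 using e2 by (simp cong: prod.cong)
  finally show ?thesis .
qed

lemma exp_sum_insert:
  fixes \<beta> h :: real and w :: "nat \<Rightarrow> real"
  assumes "S0 \<subseteq> {1..N-1::nat}" "N \<ge> 1"
  shows "exp (\<Sum>n\<in>insert N S0. \<beta> * w n + h) = exp (\<beta> * w N + h) * exp (\<Sum>n\<in>S0. \<beta> * w n + h)"
proof -
  have fin: "finite S0" using assms(1) finite_subset by blast
  have nN: "N \<notin> S0" using S0_bounds[OF assms] by blast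
  show ?thesis by (simp only: sum.insert[OF fin nN] exp_add)
qed

lemma Max_ins0_le: assumes "S0 \<subseteq> {1..N-1::nat}" "N \<ge> 1" shows "Max (insert 0 S0) < N"
proof -
  have fin: "finite S0" using assms(1) finite_subset by blast
  show ?thesis using fin S0_bounds[OF assms] assms(2) by (subst Max_less_iff) auto
qed

lemma Ff_insert:
  assumes "S0 \<subseteq> {1..N-1::nat}" "N \<ge> 1" "\<sigma> \<in> {-1,1}"
  shows "Ff K \<epsilon> \<beta> h N (insert N S0) \<sigma> = exp (\<beta> * \<sigma> + h) * K (N - Max (insert 0 S0)) *
     (\<Sum>w\<in>PiE {0..Max (insert 0 S0)} (\<lambda>_. {-1,1}). mc_prob \<epsilon> (Max (insert 0 S0)) w *
        (renewal_weight K S0 * exp (\<Sum>n\<in>S0. \<beta> * w n + h)) * Pm \<epsilon> (N - Max (insert 0 S0)) (w (Max (insert 0 S0))) \<sigma>)"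
proof -
  define m where "m = Max (insert 0 S0)"
  have mN: "m \<le> N" using Max_ins0_le[OF assms(1,2)] unfolding m_def by simp
  have fin: "finite S0" using assms(1) finite_subset by blast
  have Sm: "S0 \<subseteq> {1..m}" unfolding m_def using fin S0_bounds(1)[OF assms(1,2)] by auto
  let ?G = "\<lambda>w. renewal_weight K S0 * exp (\<Sum>n\<in>S0. \<beta> * w n + h)"
  let ?c = "exp (\<beta> * \<sigma> + h) * K (N - m)"
  have "Ff K \<epsilon> \<beta> h N (insert N S0) \<sigma> = (\<Sum>w\<in>PiE {0..N} (\<lambda>_. {-1,1}). mc_prob \<epsilon> N w *
      ?G w * (?c * (if w N = \<sigma> then 1 else 0)))"
    unfolding Ff_def
  proof (rule sum.cong[OF refl])
    fix w
    have "renewal_weight K (insert N S0) * exp (\<Sum>n\<in>insert N S0. \<beta> * w n + h) * (if w N = \<sigma> then 1 else 0)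
       = ?G w * (?c * (if w N = \<sigma> then 1 else 0))"
      unfolding rw_insert[OF assms(1,2)] exp_sum_insert[OF assms(1,2)] m_def by auto
    then show "mc_prob \<epsilon> N w * (renewal_weight K (insert N S0) * exp (\<Sum>n\<in>insert N S0. \<beta> * w n + h)) *
         (if w N = \<sigma> then 1 else 0) = mc_prob \<epsilon> N w * ?G w * (?c * (if w N = \<sigma> then 1 else 0))"
      by (simp only: mult.assoc)
  qed
  also have "\<dots> = (\<Sum>w\<in>PiE {0..m} (\<lambda>_. {-1,1}). mc_prob \<epsilon> m w * ?G w *
      (\<Sum>y\<in>{-1,1}. Pm \<epsilon> (N - m) (w m) y * (?c * (if y = \<sigma> then 1 else 0))))"
  proof (rule marginal[OF mN])
    fix w w' :: "nat \<Rightarrow> real" assume "\<forall>i\<le>m. w i = w' i"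
    then have "\<forall>n\<in>S0. w n = w' n" using Sm by auto
    then show "?G w = ?G w'" by (simp cong: sum.cong)
  qed
  also have "\<dots> = (\<Sum>w\<in>PiE {0..m} (\<lambda>_. {-1,1}). ?c * (mc_prob \<epsilon> m w * ?G w * Pm \<epsilon> (N - m) (w m) \<sigma>))"
  proof (rule sum.cong[OF refl])
    fix w
    have "(\<Sum>y\<in>{-1,1}. Pm \<epsilon> (N - m) (w m) y * (?c * (if y = \<sigma> then 1 else 0))) = ?c * Pm \<epsilon> (N - m) (w m) \<sigma>"
      using assms(3) by auto
    then show "mc_prob \<epsilon> m w * ?G w * (\<Sum>y\<in>{-1,1}. Pm \<epsilon> (N - m) (w m) y * (?c * (if y = \<sigma> then 1 else 0)))
        = ?c * (mc_prob \<epsilon> m w * ?G w * Pm \<epsilon> (N - m) (w m) \<sigma>)" by simp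
  qed
  also have "\<dots> = ?c * (\<Sum>w\<in>PiE {0..m} (\<lambda>_. {-1,1}). mc_prob \<epsilon> m w * ?G w * Pm \<epsilon> (N - m) (w m) \<sigma>)"
    by (rule sum_distrib_left[symmetric])
  finally show ?thesis unfolding m_def .
qed




lemma sum_PiE_0:
  "(\<Sum>w\<in>PiE {0..0::nat} B. f w) = (\<Sum>x\<in>B 0. f ((\<lambda>_. undefined)(0 := x)))"
proof -
  have e: "{0..0::nat} = insert 0 {}" by auto
  have "(\<Sum>w\<in>PiE {0..0::nat} B. f w) = (\<Sum>w\<in>(\<lambda>(y, g). g(0 := y)) ` (B 0 \<times> PiE {} B). f w)"
    by (simp only: e PiE_insert_eq)
  also have "\<dots> = (\<Sum>(y,g)\<in>B 0 \<times> PiE {} B. f (g(0 := y)))"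
  proof -
    have "inj_on (\<lambda>p. (snd p)(0 := fst p)) (B 0 \<times> PiE {} B)"
      using inj_combinator[of 0 "{}" B] by (simp add: case_prod_unfold)
    then show ?thesis by (subst sum.reindex) (auto simp: case_prod_unfold)
  qed
  also have "\<dots> = (\<Sum>x\<in>B 0. f ((\<lambda>_. undefined)(0 := x)))"
    by (simp add: sum.cartesian_product[symmetric] fun_upd_def)
  finally show ?thesis .
qed

lemma group_pow:
  "(\<Sum>S\<in>Pow {1..n}. F S) = F {} + (\<Sum>m\<in>{1..n}. \<Sum>S\<in>Aset m. F S)"
proof (induction n)
  case 0
  then show ?case by simp
next
  case (Suc n)
  have e: "Pow {1..Suc n} = Pow {1..n} \<union> Aset (Suc n)"
  proof -
    have "S \<subseteq> {1..Suc n} \<longleftrightarrow> S \<subseteq> {1..n} \<or> (S \<subseteq> {1..Suc n} \<and> Suc n \<in> S)" for S :: "nat set"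
    proof
      assume a: "S \<subseteq> {1..Suc n}"
      show "S \<subseteq> {1..n} \<or> (S \<subseteq> {1..Suc n} \<and> Suc n \<in> S)"
      proof (cases "Suc n \<in> S")
        case False
        have "S \<subseteq> {1..n}"
        proof
          fix x assume "x \<in> S"
          then have "x \<in> {1..Suc n}" "x \<noteq> Suc n" using a False by auto
          then show "x \<in> {1..n}" by auto
        qed
        then show ?thesis by blast
      qed (use a in blast)
    qed auto
    then show ?thesis unfolding Aset_def by blast
  qed
  have d: "Pow {1..n} \<inter> Aset (Suc n) = {}" unfolding Aset_def by auto
  have "(\<Sum>S\<in>Pow {1..Suc n}. F S) = (\<Sum>S\<in>Pow {1..n}. F S) + (\<Sum>S\<in>Aset (Suc n). F S)"
    unfolding e by (rule sum.union_disjoint[OF _ _ d]) (simp_all add: finite_Aset)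
  then show ?case using Suc by (simp add: add.assoc)
qed

lemma Aset_insert: "N \<ge> 1 \<Longrightarrow> Aset N = insert N ` Pow {1..N-1}"
proof
  assume N: "N \<ge> 1"
  show "Aset N \<subseteq> insert N ` Pow {1..N-1}"
  proof
    fix S assume "S \<in> Aset N"
    then have "S = insert N (S - {N})" "S - {N} \<in> Pow {1..N-1}" unfolding Aset_def by auto
    then show "S \<in> insert N ` Pow {1..N-1}" by blast
  qed
  show "insert N ` Pow {1..N-1} \<subseteq> Aset N"
  proof
    fix S assume "S \<in> insert N ` Pow {1..N-1}"
    then obtain S0 where S: "S = insert N S0" "S0 \<subseteq> {1..N-1}" by blast
    have "insert N S0 \<subseteq> {1..N}"
    proof
      fix x assume x: "x \<in> insert N S0"
      show "x \<in> {1..N}"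
      proof (cases "x = N")
        case False
        then have "x \<in> S0" using x by blast
        then show ?thesis using S0_bounds[OF S(2) N] by fastforce
      qed (use N in auto)
    qed
    then show "S \<in> Aset N" unfolding Aset_def S by blast
  qed
qed

lemma inj_insert_Pow: "(N::nat) \<ge> 1 \<Longrightarrow> inj_on (insert N) (Pow {1..N-1})"
proof (rule inj_onI)
  fix A B assume N: "N \<ge> 1" and A: "A \<in> Pow {1..N-1}" and B: "B \<in> Pow {1..N-1}" and e: "insert N A = insert N B"
  have "N \<notin> A" using S0_bounds(2)[of A N] A N by blast
  moreover have "N \<notin> B" using S0_bounds(2)[of B N] B N by blast
  ultimately show "A = B" using e insert_ident by metis
qed

lemma Ff_mix:
  "(\<Sum>w\<in>PiE {0..m} (\<lambda>_. {-1,1}). mc_prob \<epsilon> m w * (renewal_weight K S * exp (\<Sum>n\<in>S. \<beta> * w n + h)) * Pm \<epsilon> t (w m) \<sigma>)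
   = (\<Sum>\<tau>\<in>{-1,1}. Pm \<epsilon> t \<tau> \<sigma> * Ff K \<epsilon> \<beta> h m S \<tau>)"
proof -
  let ?G = "\<lambda>w. mc_prob \<epsilon> m w * (renewal_weight K S * exp (\<Sum>n\<in>S. \<beta> * w n + h))"
  have "(\<Sum>w\<in>PiE {0..m} (\<lambda>_. {-1,1}). ?G w * Pm \<epsilon> t (w m) \<sigma>)
     = (\<Sum>w\<in>PiE {0..m} (\<lambda>_. {-1,1}). \<Sum>\<tau>\<in>{-1,1}. Pm \<epsilon> t \<tau> \<sigma> * (?G w * (if w m = \<tau> then 1 else 0)))"
  proof (rule sum.cong[OF refl])
    fix w assume "w \<in> PiE {0..m} (\<lambda>_. {-1,1::real})"
    then have "w m = -1 \<or> w m = 1" by (rule PiE_mem_pm) simp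
    then show "?G w * Pm \<epsilon> t (w m) \<sigma> = (\<Sum>\<tau>\<in>{-1,1}. Pm \<epsilon> t \<tau> \<sigma> * (?G w * (if w m = \<tau> then 1 else 0)))"
      by auto
  qed
  also have "\<dots> = (\<Sum>\<tau>\<in>{-1,1}. \<Sum>w\<in>PiE {0..m} (\<lambda>_. {-1,1}). Pm \<epsilon> t \<tau> \<sigma> * (?G w * (if w m = \<tau> then 1 else 0)))"
    by (rule sum.swap)
  also have "\<dots> = (\<Sum>\<tau>\<in>{-1,1}. Pm \<epsilon> t \<tau> \<sigma> * Ff K \<epsilon> \<beta> h m S \<tau>)"
    unfolding Ff_def sum_distrib_left by (simp only: mult.assoc)
  finally show ?thesis .
qed

lemma Max_Aset: "S \<in> Aset m \<Longrightarrow> Max (insert 0 S) = m"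
  unfolding Aset_def by (intro Max_eqI) (auto intro: finite_subset)




lemma Wf_rec:
  assumes N: "N \<ge> 1" and s: "\<sigma> \<in> {-1,1}"
  shows "Wf K \<epsilon> \<beta> h N \<sigma> = exp (\<beta> * \<sigma> + h) * (K N / 2 +
     (\<Sum>m\<in>{1..N-1}. K (N - m) * (\<Sum>\<tau>\<in>{-1,1}. Pm \<epsilon> (N - m) \<tau> \<sigma> * Wf K \<epsilon> \<beta> h m \<tau>)))"
proof -
  define \<Phi> where "\<Phi> S0 = exp (\<beta> * \<sigma> + h) * K (N - Max (insert 0 S0)) *
     (\<Sum>w\<in>PiE {0..Max (insert 0 S0)} (\<lambda>_. {-1,1}). mc_prob \<epsilon> (Max (insert 0 S0)) w *
        (renewal_weight K S0 * exp (\<Sum>n\<in>S0. \<beta> * w n + h)) * Pm \<epsilon> (N - Max (insert 0 S0)) (w (Max (insert 0 S0))) \<sigma>)" for S0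
  have "Wf K \<epsilon> \<beta> h N \<sigma> = (\<Sum>S0\<in>Pow {1..N-1}. Ff K \<epsilon> \<beta> h N (insert N S0) \<sigma>)"
    unfolding Wf_def Aset_insert[OF N] by (rule sum.reindex[OF inj_insert_Pow[OF N], unfolded comp_def])
  also have "\<dots> = (\<Sum>S0\<in>Pow {1..N-1}. \<Phi> S0)"
    unfolding \<Phi>_def by (rule sum.cong[OF refl], rule Ff_insert) (use N s in auto)
  also have "\<dots> = \<Phi> {} + (\<Sum>m\<in>{1..N-1}. \<Sum>S\<in>Aset m. \<Phi> S)" by (rule group_pow)
  also have "\<Phi> {} = exp (\<beta> * \<sigma> + h) * (K N / 2)"
    unfolding \<Phi>_def Max_singleton diff_zero
    by (subst sum_PiE_0) (use s in \<open>auto simp: renewal_weight_def mc_prob_def Pm_def field_simps\<close>)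
  also have "(\<Sum>m\<in>{1..N-1}. \<Sum>S\<in>Aset m. \<Phi> S) = (\<Sum>m\<in>{1..N-1}. exp (\<beta> * \<sigma> + h) * (K (N - m) * (\<Sum>\<tau>\<in>{-1,1}. Pm \<epsilon> (N - m) \<tau> \<sigma> * Wf K \<epsilon> \<beta> h m \<tau>)))"
  proof (rule sum.cong[OF refl])
    fix m assume "m \<in> {1..N-1}"
    have "(\<Sum>S\<in>Aset m. \<Phi> S) = (\<Sum>S\<in>Aset m. exp (\<beta> * \<sigma> + h) * K (N - m) * (\<Sum>\<tau>\<in>{-1,1}. Pm \<epsilon> (N - m) \<tau> \<sigma> * Ff K \<epsilon> \<beta> h m S \<tau>))"
      unfolding \<Phi>_def by (rule sum.cong[OF refl]) (simp add: Max_Aset Ff_mix)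
    also have "\<dots> = exp (\<beta> * \<sigma> + h) * (K (N - m) * (\<Sum>\<tau>\<in>{-1,1}. Pm \<epsilon> (N - m) \<tau> \<sigma> * Wf K \<epsilon> \<beta> h m \<tau>))"
      unfolding Wf_def sum_pm1 by (simp add: algebra_simps sum.distrib sum_distrib_left)
    finally show "(\<Sum>S\<in>Aset m. \<Phi> S) = exp (\<beta> * \<sigma> + h) * (K (N - m) * (\<Sum>\<tau>\<in>{-1,1}. Pm \<epsilon> (N - m) \<tau> \<sigma> * Wf K \<epsilon> \<beta> h m \<tau>))" .
  qed
  finally show ?thesis by (simp only: distrib_left sum_distrib_left)
qed




locale rec2 =
  fixes W :: "nat \<Rightarrow> real \<Rightarrow> real" and E :: "real \<Rightarrow> real" and K :: "nat \<Rightarrow> real"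
    and P :: "nat \<Rightarrow> real \<Rightarrow> real \<Rightarrow> real"
  assumes rec: "\<And>N \<sigma>. N \<ge> 1 \<Longrightarrow> \<sigma> \<in> {-1,1} \<Longrightarrow>
      W N \<sigma> = E \<sigma> * (K N / 2 + (\<Sum>t\<in>{1..N-1}. K t * (\<Sum>\<tau>\<in>{-1,1}. P t \<tau> \<sigma> * W (N-t) \<tau>)))"
    and Epos: "\<And>\<sigma>. \<sigma> \<in> {-1,1} \<Longrightarrow> E \<sigma> > 0"
    and Kpos: "\<And>t. t \<ge> 1 \<Longrightarrow> K t > 0"
    and Pnn: "\<And>t \<tau> \<sigma>. \<tau> \<in> {-1,1} \<Longrightarrow> \<sigma> \<in> {-1,1} \<Longrightarrow> P t \<tau> \<sigma> \<ge> 0"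
    and Psum: "\<And>t \<sigma>. \<sigma> \<in> {-1,1} \<Longrightarrow> (\<Sum>\<tau>\<in>{-1,1}. P t \<tau> \<sigma>) = 1"
begin

lemma Wpos: "N \<ge> 1 \<Longrightarrow> \<sigma> \<in> {-1,1} \<Longrightarrow> W N \<sigma> > 0"
proof (induction N arbitrary: \<sigma> rule: less_induct)
  case (less N)
  have "(\<Sum>t\<in>{1..N-1}. K t * (\<Sum>\<tau>\<in>{-1,1}. P t \<tau> \<sigma> * W (N-t) \<tau>)) \<ge> 0"
  proof (rule sum_nonneg)
    fix t assume t: "t \<in> {1..N-1}"
    have "(\<Sum>\<tau>\<in>{-1,1}. P t \<tau> \<sigma> * W (N-t) \<tau>) \<ge> 0"
    proof (rule sum_nonneg)
      fix \<tau> :: real assume "\<tau> \<in> {-1,1}"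
      assume \<tau>: "\<tau> \<in> {-1,1}"
      have Wp: "W (N-t) \<tau> > 0" by (rule less.IH) (use t less.prems \<tau> in auto)
      show "P t \<tau> \<sigma> * W (N-t) \<tau> \<ge> 0"
        using Wp Pnn[OF \<tau> less.prems(2), of t] by simp
    qed
    then show "K t * (\<Sum>\<tau>\<in>{-1,1}. P t \<tau> \<sigma> * W (N-t) \<tau>) \<ge> 0" using Kpos[of t] t by auto
  qed
  moreover have "K N > 0" using Kpos less.prems by auto
  ultimately show ?case using rec[OF less.prems] Epos[OF less.prems(2)] by (simp add: add_pos_nonneg)
qed

lemma upper:
  fixes c :: "real \<Rightarrow> real" and C :: real
  assumes cpos: "\<And>\<tau>. \<tau> \<in> {-1,1} \<Longrightarrow> c \<tau> > 0"
    and Cc: "\<And>\<tau>. \<tau> \<in> {-1,1} \<Longrightarrow> C * c \<tau> \<ge> 1/2" and C: "C \<ge> 0"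
    and part: "\<And>n \<sigma>. \<sigma> \<in> {-1,1} \<Longrightarrow> (\<Sum>t\<in>{1..n}. E \<sigma> * K t * (\<Sum>\<tau>\<in>{-1,1}. P t \<tau> \<sigma> * c \<tau>)) \<le> c \<sigma>"
  shows "N \<ge> 1 \<Longrightarrow> \<sigma> \<in> {-1,1} \<Longrightarrow> W N \<sigma> \<le> C * c \<sigma>"
proof (induction N arbitrary: \<sigma> rule: less_induct)
  case (less N)
  let ?g = "\<lambda>t. K t * (\<Sum>\<tau>\<in>{-1,1}. P t \<tau> \<sigma> * (C * c \<tau>))"
  have 1: "K N / 2 \<le> ?g N"
  proof -
    have "(\<Sum>\<tau>\<in>{-1,1::real}. P N \<tau> \<sigma> * (1/2)) \<le> (\<Sum>\<tau>\<in>{-1,1}. P N \<tau> \<sigma> * (C * c \<tau>))"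
      by (rule sum_mono, rule mult_left_mono) (use Cc Pnn less.prems in auto)
    moreover have "(\<Sum>\<tau>\<in>{-1,1::real}. P N \<tau> \<sigma> * (1/2)) = 1/2"
      using Psum[OF less.prems(2), of N] by (simp add: sum_distrib_right[symmetric])
    ultimately show ?thesis using Kpos[of N] less.prems by (auto intro: mult_left_mono[where c="K N", of "1/2", simplified])
  qed
  have 2: "(\<Sum>t\<in>{1..N-1}. K t * (\<Sum>\<tau>\<in>{-1,1}. P t \<tau> \<sigma> * W (N-t) \<tau>)) \<le> (\<Sum>t\<in>{1..N-1}. ?g t)"
  proof (rule sum_mono)
    fix t assume t: "t \<in> {1..N-1}"
    have "(\<Sum>\<tau>\<in>{-1,1}. P t \<tau> \<sigma> * W (N-t) \<tau>) \<le> (\<Sum>\<tau>\<in>{-1,1}. P t \<tau> \<sigma> * (C * c \<tau>))"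
    proof (rule sum_mono)
      fix \<tau> :: real assume \<tau>: "\<tau> \<in> {-1,1}"
      show "P t \<tau> \<sigma> * W (N-t) \<tau> \<le> P t \<tau> \<sigma> * (C * c \<tau>)"
        by (rule mult_left_mono) (use less.IH[of "N-t" \<tau>] t less.prems \<tau> Pnn[of \<tau> \<sigma> t] in auto)
    qed
    then show "K t * (\<Sum>\<tau>\<in>{-1,1}. P t \<tau> \<sigma> * W (N-t) \<tau>) \<le> ?g t"
      using Kpos[of t] t by (auto intro: mult_left_mono)
  qed
  have 3: "?g N + (\<Sum>t\<in>{1..N-1}. ?g t) = (\<Sum>t\<in>{1..N}. ?g t)"
  proof -
    have e: "{1..N} = insert N {1..N-1}" using less.prems by auto
    show ?thesis unfolding e by (subst sum.insert) auto
  qed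
  have 4: "E \<sigma> * (\<Sum>t\<in>{1..N}. ?g t) = C * (\<Sum>t\<in>{1..N}. E \<sigma> * K t * (\<Sum>\<tau>\<in>{-1,1}. P t \<tau> \<sigma> * c \<tau>))"
    by (simp add: sum_distrib_left algebra_simps)
  have "W N \<sigma> \<le> E \<sigma> * (?g N + (\<Sum>t\<in>{1..N-1}. ?g t))"
    unfolding rec[OF less.prems] using 1 2 Epos[OF less.prems(2)] by (intro mult_left_mono) auto
  also have "\<dots> \<le> C * c \<sigma>" unfolding 3 4 using part[OF less.prems(2), of N] C by (rule mult_left_mono)
  finally show ?case .
qed

lemma lower:
  fixes c :: "real \<Rightarrow> real" and \<gamma> q :: real and T :: nat
  assumes cpos: "\<And>\<tau>. \<tau> \<in> {-1,1} \<Longrightarrow> c \<tau> > 0"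
    and T: "T \<ge> 1" and q: "q > 0" and \<gamma>: "\<gamma> > 0" and gq: "\<And>t. t \<in> {1..T} \<Longrightarrow> \<gamma>^t \<le> q"
    and part: "\<And>\<sigma>. \<sigma> \<in> {-1,1} \<Longrightarrow> (\<Sum>t\<in>{1..T}. E \<sigma> * K t * (\<Sum>\<tau>\<in>{-1,1}. P t \<tau> \<sigma> * c \<tau>)) \<ge> q * c \<sigma>"
  shows "\<exists>\<kappa>>0. \<forall>N\<ge>1. \<forall>\<sigma>\<in>{-1,1}. W N \<sigma> \<ge> \<kappa> * \<gamma>^N * c \<sigma>"
proof -
  define R where "R = (\<lambda>(N,\<sigma>). W N \<sigma> / (\<gamma>^N * c \<sigma>)) ` ({1..T} \<times> {-1,1})"
  define \<kappa> where "\<kappa> = Min R"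
  have finR: "finite R" unfolding R_def by auto
  have neR: "R \<noteq> {}" unfolding R_def using T by auto
  have Rpos: "\<forall>a\<in>R. 0 < a" unfolding R_def using Wpos cpos \<gamma> by auto
  have kpos: "\<kappa> > 0" unfolding \<kappa>_def using Min_gr_iff[OF finR neR] Rpos by blast
  have base: "\<kappa> * \<gamma>^N * c \<sigma> \<le> W N \<sigma>" if "N \<in> {1..T}" "\<sigma> \<in> {-1,1}" for N \<sigma>
  proof -
    have "W N \<sigma> / (\<gamma>^N * c \<sigma>) \<in> R" unfolding R_def using that by force
    then have "\<kappa> \<le> W N \<sigma> / (\<gamma>^N * c \<sigma>)" unfolding \<kappa>_def using finR by simp
    moreover have "\<gamma>^N * c \<sigma> > 0" using cpos that \<gamma> by auto
    ultimately show ?thesis by (simp add: pos_le_divide_eq mult.assoc)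
  qed
  have main: "N \<ge> 1 \<Longrightarrow> \<sigma> \<in> {-1,1} \<Longrightarrow> \<kappa> * \<gamma>^N * c \<sigma> \<le> W N \<sigma>" for N \<sigma>
  proof (induction N arbitrary: \<sigma> rule: less_induct)
    case (less N)
    show ?case
    proof (cases "N \<le> T")
      case True
      then show ?thesis using base less.prems by auto
    next
      case False
      let ?S = "\<lambda>t. (\<Sum>\<tau>\<in>{-1,1}. P t \<tau> \<sigma> * W (N-t) \<tau>)"
      have Snn: "?S t \<ge> 0" if "t \<in> {1..N-1}" for t
      proof (rule sum_nonneg)
        fix \<tau> :: real assume \<tau>: "\<tau> \<in> {-1,1}"
        have "W (N-t) \<tau> > 0" by (rule Wpos) (use that \<tau> in auto)
        then show "P t \<tau> \<sigma> * W (N-t) \<tau> \<ge> 0" using Pnn[OF \<tau> less.prems(2), of t] by simp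
      qed
      have s1: "(\<Sum>t\<in>{1..T}. K t * ?S t) \<le> (\<Sum>t\<in>{1..N-1}. K t * ?S t)"
      proof (rule sum_mono2)
        show "{1..T} \<subseteq> {1..N-1}" using False by auto
        fix b assume "b \<in> {1..N-1} - {1..T}"
        then have b: "b \<in> {1..N-1}" by blast
        show "0 \<le> K b * ?S b" using Snn[OF b] Kpos[of b] b by simp
      qed simp
      have s2: "(\<Sum>t\<in>{1..T}. K t * (\<Sum>\<tau>\<in>{-1,1}. P t \<tau> \<sigma> * ((\<kappa> * \<gamma>^N / q) * c \<tau>))) \<le> (\<Sum>t\<in>{1..T}. K t * ?S t)"
      proof (rule sum_mono)
        fix t assume t: "t \<in> {1..T}"
        have "(\<Sum>\<tau>\<in>{-1,1}. P t \<tau> \<sigma> * ((\<kappa> * \<gamma>^N / q) * c \<tau>)) \<le> ?S t"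
        proof (rule sum_mono)
          fix \<tau> :: real assume \<tau>: "\<tau> \<in> {-1,1}"
          have "\<gamma>^N = \<gamma>^(N-t) * \<gamma>^t" using t False by (simp add: power_add[symmetric])
          also have "\<dots> \<le> \<gamma>^(N-t) * q" using gq[OF t] \<gamma> by (intro mult_left_mono) auto
          finally have "\<gamma>^N / q \<le> \<gamma>^(N-t)" using q by (simp add: divide_le_eq)
          then have "(\<kappa> * \<gamma>^N / q) * c \<tau> \<le> \<kappa> * \<gamma>^(N-t) * c \<tau>"
          proof -
            have "\<kappa> * (\<gamma>^N / q) * c \<tau> \<le> \<kappa> * \<gamma>^(N-t) * c \<tau>"
              using kpos cpos[OF \<tau>] \<open>\<gamma>^N / q \<le> \<gamma>^(N-t)\<close> by (intro mult_right_mono mult_left_mono) auto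
            then show ?thesis by simp
          qed
          also have "\<dots> \<le> W (N-t) \<tau>" by (rule less.IH) (use t False \<tau> in auto)
          finally show "P t \<tau> \<sigma> * ((\<kappa> * \<gamma>^N / q) * c \<tau>) \<le> P t \<tau> \<sigma> * W (N-t) \<tau>"
            using Pnn[OF \<tau> less.prems(2), of t] by (intro mult_left_mono)
        qed
        then show "K t * (\<Sum>\<tau>\<in>{-1,1}. P t \<tau> \<sigma> * ((\<kappa> * \<gamma>^N / q) * c \<tau>)) \<le> K t * ?S t"
          using Kpos[of t] t by (intro mult_left_mono) auto
      qed
      have s3: "E \<sigma> * (\<Sum>t\<in>{1..T}. K t * (\<Sum>\<tau>\<in>{-1,1}. P t \<tau> \<sigma> * ((\<kappa> * \<gamma>^N / q) * c \<tau>)))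
          = (\<kappa> * \<gamma>^N / q) * (\<Sum>t\<in>{1..T}. E \<sigma> * K t * (\<Sum>\<tau>\<in>{-1,1}. P t \<tau> \<sigma> * c \<tau>))"
        by (simp add: sum_distrib_left algebra_simps)
      have "\<kappa> * \<gamma>^N * c \<sigma> = (\<kappa> * \<gamma>^N / q) * (q * c \<sigma>)" using q by simp
      also have "\<dots> \<le> (\<kappa> * \<gamma>^N / q) * (\<Sum>t\<in>{1..T}. E \<sigma> * K t * (\<Sum>\<tau>\<in>{-1,1}. P t \<tau> \<sigma> * c \<tau>))"
        using part[OF less.prems(2)] kpos \<gamma> q by (intro mult_left_mono) auto
      also have "\<dots> \<le> E \<sigma> * (\<Sum>t\<in>{1..N-1}. K t * ?S t)"
        unfolding s3[symmetric] using s1 s2 Epos[OF less.prems(2)] by (intro mult_left_mono) auto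
      also have "\<dots> \<le> W N \<sigma>"
        unfolding rec[OF less.prems] using Kpos[of N] less.prems Epos[OF less.prems(2)] by (intro mult_left_mono) auto
      finally show ?thesis .
    qed
  qed
  show ?thesis using kpos main by blast
qed

end



lemma ln_lower:
  fixes Z :: "nat \<Rightarrow> real"
  assumes k: "\<kappa> > 0" and g: "\<gamma> > 0" and Z: "Z N \<ge> \<kappa> * \<gamma>^N" and N: "N \<ge> 1"
  shows "ln (Z N) / real N \<ge> ln \<kappa> / real N + ln \<gamma>"
proof -
  have p: "\<kappa> * \<gamma>^N > 0" using k g by simp
  have "ln (\<kappa> * \<gamma>^N) \<le> ln (Z N)" using Z p by (subst ln_le_cancel_iff) auto
  moreover have "ln (\<kappa> * \<gamma>^N) = ln \<kappa> + real N * ln \<gamma>" using k g by (simp add: ln_mult ln_realpow)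
  ultimately have "ln \<kappa> + real N * ln \<gamma> \<le> ln (Z N)" by simp
  then have "(ln \<kappa> + real N * ln \<gamma>) / real N \<le> ln (Z N) / real N" using N by (intro divide_right_mono) auto
  moreover have "(ln \<kappa> + real N * ln \<gamma>) / real N = ln \<kappa> / real N + ln \<gamma>" using N by (simp add: add_divide_distrib)
  ultimately show ?thesis by simp
qed

lemma lim_zero_crit:
  fixes Z :: "nat \<Rightarrow> real"
  assumes pos: "\<And>N. N \<ge> 1 \<Longrightarrow> Z N > 0" and up: "\<And>N. N \<ge> 1 \<Longrightarrow> Z N \<le> U"
    and low: "\<And>q. 0 < q \<Longrightarrow> q < 1 \<Longrightarrow> \<exists>\<kappa>>0. \<forall>N\<ge>1. Z N \<ge> \<kappa> * q^N"
  shows "(\<lambda>N. ln (Z N) / real N) \<longlonglongrightarrow> 0"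
proof (rule order_tendstoI)
  fix a :: real assume a: "a > 0"
  have U: "U > 0" using pos[of 1] up[of 1] by auto
  have "eventually (\<lambda>N. ln U / real N < a) sequentially"
    using order_tendstoD(2)[OF lim_const_over_n[of "ln U"] a] by simp
  moreover have "eventually (\<lambda>N. N \<ge> 1) sequentially" by (rule eventually_ge_at_top)
  ultimately show "eventually (\<lambda>N. ln (Z N) / real N < a) sequentially"
  proof eventually_elim
    case (elim N)
    have "ln (Z N) \<le> ln U" using pos[of N] up[of N] elim by (subst ln_le_cancel_iff) auto
    then have "ln (Z N) / real N \<le> ln U / real N" using elim by (simp add: divide_right_mono)
    then show ?case using elim by simp
  qed
next
  fix a :: real assume a: "a < 0"
  define q where "q = exp (a/2)"
  have q: "0 < q" "q < 1" unfolding q_def using a by auto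
  obtain \<kappa> where k: "\<kappa> > 0" "\<forall>N\<ge>1. Z N \<ge> \<kappa> * q^N" using low[OF q] by blast
  have "eventually (\<lambda>N. ln \<kappa> / real N > a/2) sequentially"
    using order_tendstoD(1)[OF lim_const_over_n[of "ln \<kappa>"], of "a/2"] a by simp
  moreover have "eventually (\<lambda>N. N \<ge> 1) sequentially" by (rule eventually_ge_at_top)
  ultimately show "eventually (\<lambda>N. a < ln (Z N) / real N) sequentially"
  proof eventually_elim
    case (elim N)
    have "ln (Z N) / real N \<ge> ln \<kappa> / real N + ln q" using k q elim by (intro ln_lower) auto
    moreover have "ln q = a/2" unfolding q_def by simp
    ultimately show ?case using elim(1) by linarith
  qed
qed

lemma lim_pos_crit:
  fixes Z :: "nat \<Rightarrow> real"
  assumes g: "\<gamma> > 1" and k: "\<kappa> > 0" and low: "\<And>N. N \<ge> 1 \<Longrightarrow> Z N \<ge> \<kappa> * \<gamma>^N"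
  shows "\<not> (\<lambda>N. ln (Z N) / real N) \<longlonglongrightarrow> 0"
proof
  assume lim: "(\<lambda>N. ln (Z N) / real N) \<longlonglongrightarrow> 0"
  have lg: "ln \<gamma> > 0" using g by simp
  have "eventually (\<lambda>N. ln (Z N) / real N < ln \<gamma> / 2) sequentially"
    using order_tendstoD(2)[OF lim, of "ln \<gamma> / 2"] lg by simp
  moreover have "eventually (\<lambda>N. ln \<kappa> / real N > - ln \<gamma> / 2) sequentially"
    using order_tendstoD(1)[OF lim_const_over_n[of "ln \<kappa>"], of "- ln \<gamma> / 2"] lg by simp
  moreover have "eventually (\<lambda>N. N \<ge> 1) sequentially" by (rule eventually_ge_at_top)
  ultimately have "eventually (\<lambda>N. False) sequentially"
  proof eventually_elim
    case (elim N)
    have "ln (Z N) / real N \<ge> ln \<kappa> / real N + ln \<gamma>" using k g elim low[of N] by (intro ln_lower) auto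
    then show ?case using elim by simp
  qed
  then show False by simp
qed




lemma eig_facts:
  fixes p \<beta> :: real
  assumes p: "0 < p" "p < 1" and b: "\<beta> \<ge> 0"
  defines "\<rho> \<equiv> p * cosh \<beta> + sqrt (p\<^sup>2 * (cosh \<beta>)\<^sup>2 - 2 * p + 1)"
  defines "c1 \<equiv> exp \<beta> * (1 - p)" and "c2 \<equiv> \<rho> - exp \<beta> * p"
  shows "\<rho> > 0" "c1 > 0" "c2 > 0"
    "exp \<beta> * (c1 * p + c2 * (1 - p)) = \<rho> * c1"
    "exp (-\<beta>) * (c2 * p + c1 * (1 - p)) = \<rho> * c2"
proof -
  define E where "E = exp \<beta>"
  define ch where "ch = cosh \<beta>"
  define D where "D = p\<^sup>2 * ch\<^sup>2 - 2 * p + 1"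
  have E: "E > 0" unfolding E_def by simp
  have ch: "2 * ch = E + 1 / E" unfolding ch_def E_def cosh_field_def by (simp add: exp_minus field_simps)
  have ch1: "ch \<ge> 1" unfolding ch_def by (rule cosh_real_ge_1)
  have D: "D \<ge> (1 - p)\<^sup>2"
  proof -
    have "p\<^sup>2 * ch\<^sup>2 \<ge> p\<^sup>2 * 1" using ch1 by (intro mult_left_mono) (auto simp: power2_eq_square intro: one_le_mult_iff[THEN iffD2] mult_mono[of 1 ch 1 ch, simplified])
    then show ?thesis unfolding D_def by (simp add: power2_eq_square algebra_simps)
  qed
  have Dpos: "D > 0" using D p by (smt (verit) zero_less_power2)
  have rho: "\<rho> = p * ch + sqrt D" unfolding \<rho>_def ch_def D_def ..
  have sD: "(sqrt D)\<^sup>2 = D" using Dpos by simp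
  show "\<rho> > 0" unfolding rho using p ch1 Dpos by (simp add: add_pos_nonneg)
  show "c1 > 0" unfolding c1_def using p by simp
  have quad: "\<rho>\<^sup>2 - 2 * p * ch * \<rho> + 2 * p - 1 = 0"
    unfolding rho using sD unfolding D_def by (simp add: power2_eq_square algebra_simps)
  have key: "2 * E * ch - E\<^sup>2 = 1" using ch E by (simp add: field_simps power2_eq_square)
  have "(p * (E - ch))\<^sup>2 < D"
  proof -
    have "D - (p * (E - ch))\<^sup>2 = p\<^sup>2 * (2 * E * ch - E\<^sup>2) - 2 * p + 1"
      unfolding D_def by (simp add: power2_eq_square algebra_simps)
    also have "\<dots> = (1 - p)\<^sup>2" unfolding key by (simp add: power2_eq_square algebra_simps)
    finally show ?thesis using p by (smt (verit) zero_less_power2)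
  qed
  then have "p * (E - ch) < sqrt D" by (rule real_less_rsqrt)
  then show "c2 > 0" unfolding c2_def rho E_def[symmetric] by (simp add: algebra_simps)
  show "exp \<beta> * (c1 * p + c2 * (1 - p)) = \<rho> * c1"
    unfolding c1_def c2_def by (simp add: algebra_simps)
  have "c2 * p + c1 * (1 - p) = E * \<rho> * c2"
  proof -
    have "E * \<rho> * c2 = E * \<rho>\<^sup>2 - E\<^sup>2 * p * \<rho>" unfolding c2_def E_def by (simp add: power2_eq_square algebra_simps)
    also have "\<dots> = E * (2 * p * ch * \<rho> - 2 * p + 1) - E\<^sup>2 * p * \<rho>" proof -
      have "\<rho>\<^sup>2 = 2 * p * ch * \<rho> - 2 * p + 1" using quad by linarith
      then show ?thesis by simp
    qed
    also have "\<dots> = p * \<rho> * (2 * E * ch - E\<^sup>2) - 2 * p * E + E" by (simp add: algebra_simps power2_eq_square)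
    also have "\<dots> = p * \<rho> - 2 * p * E + E" unfolding key by simp
    also have "\<dots> = c2 * p + c1 * (1 - p)" unfolding c1_def c2_def E_def by (simp add: algebra_simps)
    finally show ?thesis ..
  qed
  then show "exp (-\<beta>) * (c2 * p + c1 * (1 - p)) = \<rho> * c2"
    using E unfolding E_def by (simp add: exp_minus field_simps)
qed


lemma Wf_rec':
  assumes N: "N \<ge> 1" and s: "\<sigma> \<in> {-1,1}"
  shows "Wf K \<epsilon> \<beta> h N \<sigma> = exp (\<beta> * \<sigma> + h) * (K N / 2 +
     (\<Sum>t\<in>{1..N-1}. K t * (\<Sum>\<tau>\<in>{-1,1}. Pm \<epsilon> t \<tau> \<sigma> * Wf K \<epsilon> \<beta> h (N - t) \<tau>)))"
proof -
  let ?g = "\<lambda>m. K (N - m) * (\<Sum>\<tau>\<in>{-1,1}. Pm \<epsilon> (N - m) \<tau> \<sigma> * Wf K \<epsilon> \<beta> h m \<tau>)"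
  have "(\<Sum>m\<in>{1..N-1}. ?g m) = (\<Sum>m\<in>{1..N-1}. ?g (N - 1 + 1 - m))"
    by (rule sum.atLeastAtMost_rev)
  also have "\<dots> = (\<Sum>t\<in>{1..N-1}. K t * (\<Sum>\<tau>\<in>{-1,1}. Pm \<epsilon> t \<tau> \<sigma> * Wf K \<epsilon> \<beta> h (N - t) \<tau>))"
  proof (rule sum.cong[OF refl])
    fix t assume "t \<in> {1..N-1}"
    then have "N - 1 + 1 - t = N - t" "N - (N - t) = t" using N by auto
    then show "?g (N - 1 + 1 - t) = K t * (\<Sum>\<tau>\<in>{-1,1}. Pm \<epsilon> t \<tau> \<sigma> * Wf K \<epsilon> \<beta> h (N - t) \<tau>)" by simp
  qed
  finally show ?thesis using Wf_rec[OF N s] by simp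
qed

lemma abs_pow_le1: "\<bar>r\<bar> \<le> 1 \<Longrightarrow> \<bar>(r::real)^n\<bar> \<le> 1"
  by (simp add: power_abs power_le_one)

lemma rec2_Wf:
  assumes Kpos: "\<And>n. n \<ge> 1 \<Longrightarrow> K n > 0" and eps: "0 \<le> \<epsilon>" "\<epsilon> < 1"
  shows "rec2 (Wf K \<epsilon> \<beta> h) (\<lambda>\<sigma>. exp (\<beta> * \<sigma> + h)) K (Pm \<epsilon>)"
proof
  fix N :: nat and \<sigma> :: real assume "N \<ge> 1" "\<sigma> \<in> {-1,1}"
  then show "Wf K \<epsilon> \<beta> h N \<sigma> = exp (\<beta> * \<sigma> + h) * (K N / 2 +
     (\<Sum>t\<in>{1..N-1}. K t * (\<Sum>\<tau>\<in>{-1,1}. Pm \<epsilon> t \<tau> \<sigma> * Wf K \<epsilon> \<beta> h (N - t) \<tau>)))"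
    by (rule Wf_rec')
next
  fix \<sigma> :: real show "exp (\<beta> * \<sigma> + h) > 0" by simp
next
  fix t :: nat assume "t \<ge> 1" then show "K t > 0" by (rule Kpos)
next
  fix t :: nat and \<tau> \<sigma> :: real assume "\<tau> \<in> {-1,1}" "\<sigma> \<in> {-1,1}"
  moreover have "\<bar>(2*\<epsilon>-1)^t\<bar> \<le> 1" using eps by (intro abs_pow_le1) auto
  ultimately show "Pm \<epsilon> t \<tau> \<sigma> \<ge> 0" unfolding Pm_def by auto
next
  fix t :: nat and \<sigma> :: real assume "\<sigma> \<in> {-1,1}"
  then show "(\<Sum>\<tau>\<in>{-1,1}. Pm \<epsilon> t \<tau> \<sigma>) = 1" unfolding Pm_def by (auto simp: field_simps)
qed




theorem mainTheorem3:
  fixes K :: "nat \<Rightarrow> real" and \<epsilon> \<beta> :: real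
  assumes Kpos: "\<And>n. n \<ge> 1 \<Longrightarrow> K n > 0"
    and Ksum: "(\<lambda>n. K (Suc n)) sums 1"
    and eps: "0 \<le> \<epsilon>" "\<epsilon> < 1"
    and beta: "\<beta> \<ge> 0"
  shows "hc_ann K \<epsilon> \<beta> =
    (let p = (\<Sum>t. K (Suc t) * (1 + (2 * \<epsilon> - 1) ^ Suc t) / 2)
     in - ln (p * cosh \<beta> + sqrt (p\<^sup>2 * (cosh \<beta>)\<^sup>2 - 2 * p + 1)))"
proof -
  define r where "r = 2 * \<epsilon> - 1"
  define A where "A t = K (Suc t) * (1 + r ^ Suc t) / 2" for t
  define B where "B t = K (Suc t) * (1 - r ^ Suc t) / 2" for t
  define p where "p = (\<Sum>t. K (Suc t) * (1 + (2 * \<epsilon> - 1) ^ Suc t) / 2)"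
  define \<rho> where "\<rho> = p * cosh \<beta> + sqrt (p\<^sup>2 * (cosh \<beta>)\<^sup>2 - 2 * p + 1)"
  define c1 where "c1 = exp \<beta> * (1 - p)"
  define c2 where "c2 = \<rho> - exp \<beta> * p"
  define c where "c \<tau> = (if \<tau> = 1 then c1 else c2)" for \<tau> :: real
  have rabs: "\<bar>r\<bar> \<le> 1" "r < 1" using eps unfolding r_def by auto
  have rt: "-1 \<le> r ^ n" "r ^ n \<le> 1" for n using abs_pow_le1[OF rabs(1), of n] by auto
  have Knn: "K (Suc t) \<ge> 0" for t using Kpos[of "Suc t"] by simp
  have Ann: "0 \<le> A t" for t unfolding A_def using Knn[of t] rt[of "Suc t"] by simp
  have Ale: "A t \<le> K (Suc t)" for t
  proof -
    have "K (Suc t) * (1 + r ^ Suc t) \<le> K (Suc t) * 2" using Knn[of t] rt[of "Suc t"] by (intro mult_left_mono) auto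
    then show ?thesis unfolding A_def by simp
  qed
  have Bnn: "0 \<le> B t" for t unfolding B_def using Knn[of t] rt[of "Suc t"] by simp
  have summK: "summable (\<lambda>t. K (Suc t))" using Ksum by (rule sums_summable)
  have summA: "summable A" by (rule summable_comparison_test'[OF summK, of 0]) (use Ann Ale in auto)
  have pA: "p = suminf A" unfolding p_def A_def r_def ..
  have Asums: "A sums p" unfolding pA using summA by (rule summable_sums)
  have Bsums: "B sums (1 - p)"
  proof -
    have "(\<lambda>t. K (Suc t) - A t) sums (1 - p)" by (rule sums_diff[OF Ksum Asums])
    moreover have "(\<lambda>t. K (Suc t) - A t) = B" by (simp add: fun_eq_iff A_def B_def field_simps)
    ultimately show ?thesis by simp
  qed
  have p0: "p > 0"
  proof -
    have k2: "0 < K (Suc (Suc 0))" using Kpos[of "Suc (Suc 0)"] by simp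
    have "0 < 1 + r * r" by (simp add: add_pos_nonneg)
    then have "A 1 > 0" unfolding A_def using k2 by simp
    then show ?thesis unfolding pA by (intro suminf_pos2[OF summA Ann])
  qed
  have p1: "p < 1"
  proof -
    have "B 0 > 0" unfolding B_def using Kpos[of 1] rabs by simp
    then have "suminf B > 0" by (intro suminf_pos2[OF sums_summable[OF Bsums] Bnn])
    then show ?thesis using sums_unique[OF Bsums] by simp
  qed
  note eig = eig_facts[OF p0 p1 beta]
  have rho0: "\<rho> > 0" using eig(1) unfolding \<rho>_def .
  have c10: "c1 > 0" using eig(2) unfolding c1_def .
  have c20: "c2 > 0" using eig(3) unfolding c2_def \<rho>_def .
  have eig1: "exp \<beta> * (c1 * p + c2 * (1 - p)) = \<rho> * c1" using eig(4) unfolding c1_def c2_def \<rho>_def .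
  have eig2: "exp (-\<beta>) * (c2 * p + c1 * (1 - p)) = \<rho> * c2" using eig(5) unfolding c1_def c2_def \<rho>_def .
  have cpos: "c \<tau> > 0" if "\<tau> \<in> {-1,1}" for \<tau> unfolding c_def using c10 c20 by simp
  have cm: "c (-1) = c2" "c 1 = c1" unfolding c_def by simp_all
  have termeq: "K (Suc t) * (\<Sum>\<tau>\<in>{-1,1}. Pm \<epsilon> (Suc t) \<tau> \<sigma> * c \<tau>) =
      (if \<sigma> = 1 then c1 * A t + c2 * B t else c2 * A t + c1 * B t)" if "\<sigma> \<in> {-1,1}" for t \<sigma>
    using that unfolding sum_pm1 cm Pm_def A_def B_def r_def by (auto simp: field_simps)
  define G where "G h \<sigma> t = exp (\<beta> * \<sigma> + h) * K t * (\<Sum>\<tau>\<in>{-1,1}. Pm \<epsilon> t \<tau> \<sigma> * c \<tau>)" for h \<sigma> t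
  have Gsums: "(\<lambda>t. G h \<sigma> (Suc t)) sums (exp h * \<rho> * c \<sigma>)" if s: "\<sigma> \<in> {-1,1}" for h \<sigma>
  proof (cases "\<sigma> = 1")
    case True
    have "(\<lambda>t. exp (\<beta> + h) * (c1 * A t + c2 * B t)) sums (exp (\<beta> + h) * (c1 * p + c2 * (1 - p)))"
      by (intro sums_mult sums_add Asums Bsums)
    moreover have "(\<lambda>t. G h \<sigma> (Suc t)) = (\<lambda>t. exp (\<beta> + h) * (c1 * A t + c2 * B t))"
      unfolding G_def using termeq[OF s] True by (simp add: fun_eq_iff mult.assoc)
    moreover have "exp (\<beta> + h) * (c1 * p + c2 * (1 - p)) = exp h * \<rho> * c \<sigma>"
    proof -
      have "exp (\<beta> + h) * (c1 * p + c2 * (1 - p)) = exp h * (exp \<beta> * (c1 * p + c2 * (1 - p)))"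
        by (simp add: exp_add mult_ac)
      also have "\<dots> = exp h * (\<rho> * c1)" by (simp only: eig1)
      finally show ?thesis using True cm by simp
    qed
    ultimately show ?thesis by simp
  next
    case False
    then have sm: "\<sigma> = -1" using s by auto
    have "(\<lambda>t. exp (- \<beta> + h) * (c2 * A t + c1 * B t)) sums (exp (- \<beta> + h) * (c2 * p + c1 * (1 - p)))"
      by (intro sums_mult sums_add Asums Bsums)
    moreover have "(\<lambda>t. G h \<sigma> (Suc t)) = (\<lambda>t. exp (- \<beta> + h) * (c2 * A t + c1 * B t))"
      unfolding G_def using termeq[OF s] sm by (simp add: fun_eq_iff mult.assoc)
    moreover have "exp (- \<beta> + h) * (c2 * p + c1 * (1 - p)) = exp h * \<rho> * c \<sigma>"
    proof -
      have "exp (- \<beta> + h) * (c2 * p + c1 * (1 - p)) = exp h * (exp (-\<beta>) * (c2 * p + c1 * (1 - p)))"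
        by (simp add: exp_add[symmetric] mult_ac)
      also have "\<dots> = exp h * (\<rho> * c2)" by (simp only: eig2)
      finally show ?thesis using sm cm by simp
    qed
    ultimately show ?thesis by simp
  qed
  have Gnn: "G h \<sigma> (Suc t) \<ge> 0" if "\<sigma> \<in> {-1,1}" for h \<sigma> t
  proof -
    have "(\<Sum>\<tau>\<in>{-1,1}. Pm \<epsilon> (Suc t) \<tau> \<sigma> * c \<tau>) \<ge> 0"
    proof (rule sum_nonneg)
      fix \<tau> :: real assume \<tau>: "\<tau> \<in> {-1,1}"
      have "\<bar>(2*\<epsilon>-1)^Suc t\<bar> \<le> 1" using eps by (intro abs_pow_le1) auto
      then have "Pm \<epsilon> (Suc t) \<tau> \<sigma> \<ge> 0" using \<tau> that unfolding Pm_def by auto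
      then show "Pm \<epsilon> (Suc t) \<tau> \<sigma> * c \<tau> \<ge> 0" using cpos[OF \<tau>] by simp
    qed
    moreover have "K (Suc t) \<ge> 0" by (rule Knn)
    ultimately show ?thesis unfolding G_def by simp
  qed
  have shift: "(\<Sum>t\<in>{1..n}. G h \<sigma> t) = (\<Sum>t<n. G h \<sigma> (Suc t))" for h \<sigma> n
    using sum.atLeast1_atMost_eq[of "G h \<sigma>" n] by simp
  have part_le: "(\<Sum>t\<in>{1..n}. G h \<sigma> t) \<le> exp h * \<rho> * c \<sigma>" if "\<sigma> \<in> {-1,1}" for h \<sigma> n
  proof -
    have "(\<Sum>t<n. G h \<sigma> (Suc t)) \<le> (\<Sum>t. G h \<sigma> (Suc t))"
      by (rule sum_le_suminf) (use sums_summable[OF Gsums[OF that]] Gnn[OF that] in auto)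
    then show ?thesis unfolding shift using sums_unique[OF Gsums[OF that, of h]] by simp
  qed
  have part_ev: "eventually (\<lambda>n. q * c \<sigma> < (\<Sum>t\<in>{1..n}. G h \<sigma> t)) sequentially"
    if "\<sigma> \<in> {-1,1}" "q * c \<sigma> < exp h * \<rho> * c \<sigma>" for h \<sigma> q
  proof -
    have "(\<lambda>n. \<Sum>t<n. G h \<sigma> (Suc t)) \<longlonglongrightarrow> exp h * \<rho> * c \<sigma>"
      using Gsums[OF that(1)] unfolding sums_def .
    from order_tendstoD(1)[OF this that(2)] show ?thesis unfolding shift .
  qed
  have getT: "\<exists>T\<ge>1. \<forall>\<sigma>\<in>{-1,1}. q * c \<sigma> \<le> (\<Sum>t\<in>{1..T}. G h \<sigma> t)"
    if "q < exp h * \<rho>" for h q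
  proof -
    have lt: "q * c \<sigma> < exp h * \<rho> * c \<sigma>" if "\<sigma> \<in> {-1,1}" for \<sigma>
      using \<open>q < exp h * \<rho>\<close> cpos[OF that] by simp
    have "eventually (\<lambda>n. n \<ge> 1 \<and> q * c 1 < (\<Sum>t\<in>{1..n}. G h 1 t) \<and> q * c (-1) < (\<Sum>t\<in>{1..n}. G h (-1) t)) sequentially"
      using eventually_ge_at_top[of 1] part_ev[of 1 q h] part_ev[of "-1" q h] lt[of 1] lt[of "-1"]
      by (auto intro: eventually_conj)
    then obtain T where "T \<ge> 1" "q * c 1 < (\<Sum>t\<in>{1..T}. G h 1 t)" "q * c (-1) < (\<Sum>t\<in>{1..T}. G h (-1) t)"
      unfolding eventually_sequentially by blast
    then show ?thesis by (intro exI[of _ T]) auto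
  qed
  define hc where "hc = - ln \<rho>"
  have ehc: "exp hc * \<rho> = 1" unfolding hc_def using rho0 by (simp add: exp_minus)
  define Sset where "Sset = {h. (\<lambda>N. ln (Zann K \<epsilon> N \<beta> h) / real N) \<longlonglongrightarrow> 0}"
  have mem: "hc \<in> Sset"
  proof -
    interpret R: rec2 "Wf K \<epsilon> \<beta> hc" "\<lambda>\<sigma>. exp (\<beta> * \<sigma> + hc)" K "Pm \<epsilon>"
      by (rule rec2_Wf[OF Kpos eps])
    define C where "C = max (1 / (2 * c1)) (1 / (2 * c2))"
    have C0: "C \<ge> 0" unfolding C_def using c10 by (simp add: le_max_iff_disj)
    have Cc: "C * c \<tau> \<ge> 1/2" if "\<tau> \<in> {-1,1}" for \<tau>
    proof -
      have "1 / (2 * c \<tau>) \<le> C" unfolding C_def c_def by auto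
      then show ?thesis using cpos[OF that] by (simp add: divide_le_eq field_simps)
    qed
    have up: "Wf K \<epsilon> \<beta> hc N \<sigma> \<le> C * c \<sigma>" if "N \<ge> 1" "\<sigma> \<in> {-1,1}" for N \<sigma>
    proof (rule R.upper[OF cpos Cc C0 _ that])
      fix n and \<sigma>' :: real assume "\<sigma>' \<in> {-1,1}"
      from part_le[OF this, of hc n] show "(\<Sum>t\<in>{1..n}. exp (\<beta> * \<sigma>' + hc) * K t * (\<Sum>\<tau>\<in>{-1,1}. Pm \<epsilon> t \<tau> \<sigma>' * c \<tau>)) \<le> c \<sigma>'"
        unfolding G_def ehc by simp
    qed
    show ?thesis unfolding Sset_def mem_Collect_eq
    proof (rule lim_zero_crit)
      fix N :: nat assume "N \<ge> 1"
      then show "Zann K \<epsilon> N \<beta> hc > 0" unfolding Zann_W using R.Wpos[of N 1] R.Wpos[of N "-1"] by simp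
    next
      fix N :: nat assume N: "N \<ge> 1"
      show "Zann K \<epsilon> N \<beta> hc \<le> C * c1 + C * c2" unfolding Zann_W
        using up[OF N, of 1] up[OF N, of "-1"] cm by simp
    next
      fix q :: real assume q: "0 < q" "q < 1"
      obtain T where T: "T \<ge> 1" "\<forall>\<sigma>\<in>{-1,1}. q * c \<sigma> \<le> (\<Sum>t\<in>{1..T}. G hc \<sigma> t)"
        using getT[of q hc] q ehc by auto
      have "\<exists>\<kappa>>0. \<forall>N\<ge>1. \<forall>\<sigma>\<in>{-1,1}. Wf K \<epsilon> \<beta> hc N \<sigma> \<ge> \<kappa> * q^N * c \<sigma>"
      proof (rule R.lower[OF cpos T(1) q(1) q(1)])
        fix t assume "t \<in> {1..T}"
        then show "q ^ t \<le> q" using power_decreasing[of 1 t q] q by simp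
      next
        fix \<sigma> :: real assume "\<sigma> \<in> {-1,1}"
        then show "(\<Sum>t\<in>{1..T}. exp (\<beta> * \<sigma> + hc) * K t * (\<Sum>\<tau>\<in>{-1,1}. Pm \<epsilon> t \<tau> \<sigma> * c \<tau>)) \<ge> q * c \<sigma>"
          using T(2) unfolding G_def by blast
      qed
      then obtain \<kappa> where k: "\<kappa> > 0" "\<forall>N\<ge>1. \<forall>\<sigma>\<in>{-1,1}. Wf K \<epsilon> \<beta> hc N \<sigma> \<ge> \<kappa> * q^N * c \<sigma>" by blast
      show "\<exists>\<kappa>>0. \<forall>N\<ge>1. Zann K \<epsilon> N \<beta> hc \<ge> \<kappa> * q^N"
      proof (intro exI[of _ "\<kappa> * (c1 + c2)"] conjI allI impI)
        show "\<kappa> * (c1 + c2) > 0" using k c10 c20 by simp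
        fix N :: nat assume "N \<ge> 1"
        then have "Wf K \<epsilon> \<beta> hc N 1 \<ge> \<kappa> * q^N * c1" "Wf K \<epsilon> \<beta> hc N (-1) \<ge> \<kappa> * q^N * c2"
          using k(2) cm by auto
        then show "Zann K \<epsilon> N \<beta> hc \<ge> \<kappa> * (c1 + c2) * q^N" unfolding Zann_W by (simp add: algebra_simps)
      qed
    qed
  qed
  have bound: "h \<le> hc" if "h \<in> Sset" for h
  proof (rule ccontr)
    assume "\<not> h \<le> hc"
    then have "exp hc < exp h" by simp
    then have lam: "exp h * \<rho> > 1" using ehc rho0 by (metis mult_strict_right_mono)
    define q where "q = (1 + exp h * \<rho>) / 2"
    have q1: "1 < q" unfolding q_def using lam by (simp add: mult.commute)
    have q2: "q < exp h * \<rho>" unfolding q_def using lam by (simp add: mult.commute)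
    note q = q1 q2
    interpret R: rec2 "Wf K \<epsilon> \<beta> h" "\<lambda>\<sigma>. exp (\<beta> * \<sigma> + h)" K "Pm \<epsilon>"
      by (rule rec2_Wf[OF Kpos eps])
    obtain T where T: "T \<ge> 1" "\<forall>\<sigma>\<in>{-1,1}. q * c \<sigma> \<le> (\<Sum>t\<in>{1..T}. G h \<sigma> t)"
      using getT[OF q(2)] by auto
    define \<gamma> where "\<gamma> = exp (ln q / real T)"
    have lq: "ln q > 0" using q by simp
    have g1: "\<gamma> > 1" unfolding \<gamma>_def using lq T by simp
    have "\<exists>\<kappa>>0. \<forall>N\<ge>1. \<forall>\<sigma>\<in>{-1,1}. Wf K \<epsilon> \<beta> h N \<sigma> \<ge> \<kappa> * \<gamma>^N * c \<sigma>"
    proof (rule R.lower[OF cpos T(1)])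
      show "q > 0" using q by simp
      show "\<gamma> > 0" unfolding \<gamma>_def by simp
    next
      fix t assume t: "t \<in> {1..T}"
      have "\<gamma> ^ t = exp (real t * (ln q / real T))" unfolding \<gamma>_def by (rule exp_of_nat_mult[symmetric])
      also have "\<dots> \<le> exp (ln q)"
      proof -
        have "real t * (ln q / real T) \<le> real T * (ln q / real T)" using t lq by (intro mult_right_mono) auto
        then show ?thesis using T by simp
      qed
      also have "\<dots> = q" using q by simp
      finally show "\<gamma> ^ t \<le> q" .
    next
      fix \<sigma> :: real assume "\<sigma> \<in> {-1,1}"
      then show "(\<Sum>t\<in>{1..T}. exp (\<beta> * \<sigma> + h) * K t * (\<Sum>\<tau>\<in>{-1,1}. Pm \<epsilon> t \<tau> \<sigma> * c \<tau>)) \<ge> q * c \<sigma>"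
        using T(2) unfolding G_def by blast
    qed
    then obtain \<kappa> where k: "\<kappa> > 0" "\<forall>N\<ge>1. \<forall>\<sigma>\<in>{-1,1}. Wf K \<epsilon> \<beta> h N \<sigma> \<ge> \<kappa> * \<gamma>^N * c \<sigma>" by blast
    have "\<not> (\<lambda>N. ln (Zann K \<epsilon> N \<beta> h) / real N) \<longlonglongrightarrow> 0"
    proof (rule lim_pos_crit[OF g1])
      show "\<kappa> * (c1 + c2) > 0" using k c10 c20 by simp
      fix N :: nat assume "N \<ge> 1"
      then have "Wf K \<epsilon> \<beta> h N 1 \<ge> \<kappa> * \<gamma>^N * c1" "Wf K \<epsilon> \<beta> h N (-1) \<ge> \<kappa> * \<gamma>^N * c2"
        using k(2) cm by auto
      then show "Zann K \<epsilon> N \<beta> h \<ge> \<kappa> * (c1 + c2) * \<gamma>^N" unfolding Zann_W by (simp add: algebra_simps)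
    qed
    then show False using that unfolding Sset_def by simp
  qed
  have "hc_ann K \<epsilon> \<beta> = hc"
    unfolding hc_ann_def Sset_def[symmetric] by (rule cSup_eq_maximum[OF mem bound])
  then show ?thesis unfolding hc_def \<rho>_def p_def Let_def by simp
qed


end
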